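(* Let $n\ge2$ and let $\widetilde X$ be an $n\times n$ real random matrix whose rows are independent and identically distributed random vectors in $\mathbb{R}^n$ (with arbitrary common distribution). Then for every choice of norm $\|\cdot\|$ on $\mathbb{R}^{n\times n}$, $$\mathbb{E}\big[\kappa(\widetilde X)\big]=+\infty.$$
   Context: For a norm $\|\cdot\|$ on $\mathbb{R}^{n\times n}$, the condition number of $A\in\mathbb{R}^{n\times n}$ is $\kappa(A)=\|A\|\,\|A^{-1}\|$ if $A$ is invertible and $\kappa(A)=+\infty$ otherwise. *)

theory Defs
  imports "HOL-Probability.Probability"
begin

definition is_matrix_norm :: "(real^'n^'n \<Rightarrow> real) \<Rightarrow> bool" where
  "is_matrix_norm N \<longleftrightarrow>
     (\<forall>A. 0 \<le> N A) \<and> (\<forall>A. N A = 0 \<longleftrightarrow> A = 0) \<and>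
     (\<forall>c A. N (c *\<^sub>R A) = \<bar>c\<bar> * N A) \<and>
     (\<forall>A B. N (A + B) \<le> N A + N B)"

definition cond_num :: "(real^'n^'n \<Rightarrow> real) \<Rightarrow> real^'n^'n \<Rightarrow> ennreal" where
  "cond_num N A = (if invertible A then ennreal (N A * N (matrix_inv A)) else \<top>)"

end

theory Submission
  imports Defs "HOL-Analysis.Harmonic_Numbers"
begin


lemma matnorm_basic:
  assumes N: "is_matrix_norm N"
  shows "N 0 = 0" "N (- A) = N A" "N (A - B) \<ge> \<bar>N A - N B\<bar>"
proof -
  show N0: "N 0 = 0" using N unfolding is_matrix_norm_def by auto
  have h: "\<forall>c A. N (c *\<^sub>R A) = \<bar>c\<bar> * N A" using N by (simp add: is_matrix_norm_def)
  have "N ((-1) *\<^sub>R A) = \<bar>-1\<bar> * N A" by (rule h[rule_format])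
  then show "N (- A) = N A" by simp
  have t: "\<And>A B. N (A + B) \<le> N A + N B" using N unfolding is_matrix_norm_def by auto
  have neg: "\<And>A. N (- A) = N A"
  proof -
    fix A have "N ((-1) *\<^sub>R A) = \<bar>-1\<bar> * N A" by (rule h[rule_format])
    then show "N (- A) = N A" by simp
  qed
  have "N A \<le> N (A - B) + N B" using t[of "A - B" B] by simp
  moreover have "N B \<le> N (A - B) + N A" using t[of "B - A" A] neg[of "B - A"] by simp
  ultimately show "N (A - B) \<ge> \<bar>N A - N B\<bar>" by linarith
qed

lemma matnorm_sum:
  assumes N: "is_matrix_norm N" and "finite S"
  shows "N (\<Sum>b\<in>S. f b) \<le> (\<Sum>b\<in>S. N (f b))"
  using assms(2)
proof (induction S rule: finite_induct)
  case empty then show ?case using matnorm_basic[OF N] by simp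
next
  case (insert x F)
  have "N (f x + sum f F) \<le> N (f x) + N (sum f F)" using N unfolding is_matrix_norm_def by auto
  then show ?case using insert by simp
qed

lemma matnorm_upper:
  assumes N: "is_matrix_norm N"
  shows "N A \<le> (\<Sum>b\<in>Basis. N b) * norm A"
proof -
  have "N A = N (\<Sum>b\<in>Basis. (A \<bullet> b) *\<^sub>R b)" by (simp add: euclidean_representation)
  also have "\<dots> \<le> (\<Sum>b\<in>Basis. N ((A \<bullet> b) *\<^sub>R b))" by (rule matnorm_sum[OF N]) simp
  also have "\<dots> = (\<Sum>b\<in>Basis. \<bar>A \<bullet> b\<bar> * N b)" using N unfolding is_matrix_norm_def by auto
  also have "\<dots> \<le> (\<Sum>b\<in>Basis. norm A * N b)"
    apply (rule sum_mono) apply (rule mult_right_mono)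
    using Basis_le_norm N unfolding is_matrix_norm_def by auto
  also have "\<dots> = (\<Sum>b\<in>Basis. N b) * norm A" by (simp add: sum_distrib_left mult.commute)
  finally show ?thesis .
qed

lemma matnorm_cont:
  assumes N: "is_matrix_norm N"
  shows "continuous_on UNIV N"
proof -
  define C where "C = (\<Sum>b\<in>Basis. N b)"
  have C0: "C \<ge> 0" unfolding C_def using N unfolding is_matrix_norm_def by (auto intro: sum_nonneg)
  have L: "dist (N x) (N y) \<le> C * dist x y" for x y
  proof -
    have "dist (N x) (N y) = \<bar>N x - N y\<bar>" by (simp add: dist_real_def)
    also have "\<dots> \<le> N (x - y)" using matnorm_basic(3)[OF N] by blast
    also have "\<dots> \<le> C * norm (x - y)" unfolding C_def by (rule matnorm_upper[OF N])
    finally show ?thesis by (simp add: dist_norm)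
  qed
  show ?thesis
    unfolding continuous_on_iff
  proof (intro ballI allI impI)
    fix x :: "real^'a^'a" and e :: real assume "0 < e"
    show "\<exists>d>0. \<forall>x'\<in>UNIV. dist x' x < d \<longrightarrow> dist (N x') (N x) < e"
    proof (intro exI[of _ "e / (C + 1)"] conjI ballI impI)
      show "0 < e / (C + 1)" using \<open>0 < e\<close> C0 by simp
      fix x' assume "dist x' x < e / (C + 1)"
      then have "(C + 1) * dist x' x < e" using C0 by (simp add: field_simps)
      moreover have "C * dist x' x \<le> (C + 1) * dist x' x" by (simp add: distrib_right)
      ultimately show "dist (N x') (N x) < e" using L[of x' x] by linarith
    qed
  qed
qed

lemma matnorm_lower:
  assumes N: "is_matrix_norm N"
  obtains c where "c > 0" "\<And>A. c * norm A \<le> N A"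
proof -
  have h: "\<forall>c A. N (c *\<^sub>R A) = \<bar>c\<bar> * N A" using N by (simp add: is_matrix_norm_def)
  have cpt: "compact (sphere (0::real^'a^'a) 1)" by simp
  have ne: "sphere (0::real^'a^'a) 1 \<noteq> {}" by simp
  have ct: "continuous_on (sphere 0 1) N" using matnorm_cont[OF N] continuous_on_subset by blast
  obtain A0 where A0: "A0 \<in> sphere 0 1" "\<And>A. A \<in> sphere 0 1 \<Longrightarrow> N A0 \<le> N A"
    using continuous_attains_inf[OF cpt ne ct] by auto
  have "A0 \<noteq> 0" using A0 by auto
  moreover have "N A0 \<ge> 0" "N A0 = 0 \<longleftrightarrow> A0 = 0" using N unfolding is_matrix_norm_def by auto
  ultimately have c: "N A0 > 0" by linarith
  have "N A0 * norm A \<le> N A" for A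
  proof (cases "A = 0")
    case True then show ?thesis using matnorm_basic(1)[OF N] by simp
  next
    case False
    then have "(1 / norm A) *\<^sub>R A \<in> sphere 0 1" by (simp add: norm_scaleR)
    then have "N A0 \<le> N ((1 / norm A) *\<^sub>R A)" by (rule A0)
    also have "\<dots> = \<bar>1 / norm A\<bar> * N A" by (rule h[rule_format])
    also have "\<dots> = N A / norm A" by simp
    finally show ?thesis using False by (simp add: field_simps)
  qed
  then show ?thesis using c that by blast
qed



lemma meas_row[measurable]:
  "(\<lambda>x::('b::euclidean_space)^'n. x $ i) \<in> borel_measurable borel"
  by (intro borel_measurable_continuous_onI continuous_intros)

lemma minv_props:
  fixes A :: "real^'n^'n"
  assumes "invertible A"
  shows "A ** matrix_inv A = mat 1" "matrix_inv A ** A = mat 1"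
proof -
  have "\<exists>A'. A ** A' = mat 1 \<and> A' ** A = mat 1" using assms unfolding invertible_def by blast
  then have "A ** matrix_inv A = mat 1 \<and> matrix_inv A ** A = mat 1"
    unfolding matrix_inv_def by (rule someI_ex)
  then show "A ** matrix_inv A = mat 1" "matrix_inv A ** A = mat 1" by auto
qed

lemma meas_det_gen:
  fixes F :: "'b \<Rightarrow> real^'n^'n"
  assumes "\<And>k l. (\<lambda>x. F x $ k $ l) \<in> borel_measurable M"
  shows "(\<lambda>x. det (F x)) \<in> borel_measurable M"
  unfolding det_def
  by (intro borel_measurable_sum borel_measurable_times borel_measurable_prod borel_measurable_const assms)

lemma meas_det[measurable]: "(det :: real^'n^'n \<Rightarrow> real) \<in> borel_measurable borel"
  unfolding det_def by measurable

definition Minv :: "real^'n^'n \<Rightarrow> real^'n^'n" where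
  "Minv A = (\<chi> i j. det (\<chi> k l. if l = i then axis j 1 $ k else A$k$l) / det A)"

lemma meas_Minv[measurable]: "Minv \<in> borel_measurable borel"
proof -
  have "(\<lambda>A::real^'n^'n. Minv A \<bullet> b) \<in> borel_measurable borel" if "b \<in> Basis" for b
  proof -
    from that obtain i u where b: "b = axis i u" "u \<in> Basis" unfolding Basis_vec_def by auto
    from b(2) obtain j where u: "u = axis j (1::real)" unfolding Basis_vec_def by auto
    have "Minv A \<bullet> b = det (\<chi> k l. if l = i then axis j 1 $ k else A$k$l) / det A" for A
      by (simp add: b u inner_axis Minv_def)
    moreover have "(\<lambda>A::real^'n^'n. det (\<chi> k l. if l = i then axis j 1 $ k else A$k$l) / det A) \<in> borel_measurable borel"
      by (intro borel_measurable_divide meas_det_gen) simp_all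
    ultimately show ?thesis by simp
  qed
  then show ?thesis using borel_measurable_euclidean_space by blast
qed

lemma matrix_inv_Minv:
  fixes A :: "real^'n^'n"
  assumes "invertible A"
  shows "matrix_inv A = Minv A"
proof -
  have d: "det A \<noteq> 0" using assms invertible_det_nz by blast
  have "matrix_inv A $ i $ j = Minv A $ i $ j" for i j
  proof -
    have "A *v (matrix_inv A *v axis j 1) = axis j 1"
      by (simp add: matrix_vector_mul_assoc minv_props[OF assms])
    then have "matrix_inv A *v axis j 1 = (\<chi> k. det(\<chi> i l. if l=k then axis j 1 $i else A$i$l) / det A)"
      using cramer[OF d] by blast
    then have "(matrix_inv A *v axis j 1) $ i = det(\<chi> k l. if l=i then axis j 1 $k else A$k$l) / det A"
      by simp
    moreover have "(matrix_inv A *v axis j 1) $ i = matrix_inv A $ i $ j"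
      by (simp add: matrix_vector_mult_basis column_def)
    ultimately show ?thesis by (simp add: Minv_def)
  qed
  then show ?thesis by (simp add: vec_eq_iff)
qed

lemma meas_cond_num:
  assumes N: "is_matrix_norm N"
  shows "cond_num N \<in> borel_measurable borel"
proof -
  have NM[measurable]: "N \<in> borel_measurable borel"
    using matnorm_cont[OF N] by (rule borel_measurable_continuous_onI)
  have "cond_num N A = (if det A = 0 then \<top> else ennreal (N A * N (Minv A)))" for A
    unfolding cond_num_def using matrix_inv_Minv invertible_det_nz by metis
  then have e: "cond_num N = (\<lambda>A. if det A = 0 then \<top> else ennreal (N A * N (Minv A)))" by auto
  show ?thesis unfolding e by measurable
qed



definition th :: "real \<Rightarrow> real \<Rightarrow> real" where
  "th x y = (if x = 0 then pi/2 else arctan (y / x))"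

lemma th_bounds: "- (pi/2) \<le> th x y" "th x y \<le> pi/2"
  unfolding th_def using arctan_lbound arctan_ubound
  by (auto simp: less_imp_le)

lemma th_rep:
  "\<exists>e. (e = 1 \<or> e = -1) \<and> x = e * sqrt (x^2+y^2) * cos (th x y) \<and> y = e * sqrt (x^2+y^2) * sin (th x y)"
proof (cases "x = 0")
  case True
  then show ?thesis
    by (intro exI[of _ "if y < 0 then -1 else 1"]) (auto simp: th_def)
next
  case False
  let ?t = "y / x"
  have s: "sqrt (x^2+y^2) = \<bar>x\<bar> * sqrt (1 + ?t^2)"
  proof -
    have "x^2+y^2 = x^2 * (1 + ?t^2)" using False by (simp add: field_simps power2_eq_square)
    then show ?thesis by (simp add: real_sqrt_mult)
  qed
  have p: "sqrt (1 + ?t^2) > 0" by (simp add: add_pos_nonneg)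
  show ?thesis
  proof (intro exI[of _ "sgn x"] conjI)
    show "sgn x = 1 \<or> sgn x = -1" using False by (auto simp: sgn_if)
    show "x = sgn x * sqrt (x^2+y^2) * cos (th x y)"
      using False p unfolding s th_def by (simp add: cos_arctan field_simps sgn_if)
    show "y = sgn x * sqrt (x^2+y^2) * sin (th x y)"
      using False p unfolding s th_def by (simp add: sin_arctan field_simps sgn_if)
  qed
qed

lemma det2_bound:
  "\<bar>x1 * y2 - y1 * x2\<bar> \<le> sqrt (x1^2+y1^2) * sqrt (x2^2+y2^2) * \<bar>th x1 y1 - th x2 y2\<bar>"
proof -
  obtain e1 where e1: "e1 = 1 \<or> e1 = -1" "x1 = e1 * sqrt (x1^2+y1^2) * cos (th x1 y1)"
    "y1 = e1 * sqrt (x1^2+y1^2) * sin (th x1 y1)" using th_rep by blast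
  obtain e2 where e2: "e2 = 1 \<or> e2 = -1" "x2 = e2 * sqrt (x2^2+y2^2) * cos (th x2 y2)"
    "y2 = e2 * sqrt (x2^2+y2^2) * sin (th x2 y2)" using th_rep by blast
  define r1 where "r1 = sqrt (x1^2+y1^2)"
  define r2 where "r2 = sqrt (x2^2+y2^2)"
  define t1 where "t1 = th x1 y1"
  define t2 where "t2 = th x2 y2"
  have "x1 * y2 - y1 * x2 = e1 * e2 * r1 * r2 * (cos t1 * sin t2 - sin t1 * cos t2)"
    by (subst e1(2), subst e1(3), subst e2(2), subst e2(3)) (simp add: r1_def r2_def t1_def t2_def algebra_simps)
  also have "cos t1 * sin t2 - sin t1 * cos t2 = sin (t2 - t1)" by (simp add: sin_diff)
  finally have "\<bar>x1 * y2 - y1 * x2\<bar> = r1 * r2 * \<bar>sin (t2 - t1)\<bar>"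
    using e1(1) e2(1) by (auto simp: abs_mult r1_def r2_def)
  also have "\<dots> \<le> r1 * r2 * \<bar>t2 - t1\<bar>"
    by (intro mult_left_mono abs_sin_x_le_abs_x) (auto simp: r1_def r2_def)
  finally show ?thesis by (simp add: r1_def r2_def t1_def t2_def abs_minus_commute)
qed



lemma mv_comp: "((A::real^'n^'n) *v x) $ i = A $ i \<bullet> x"
  by (simp add: matrix_vector_mult_def inner_vec_def mult.commute)

lemma mv_bound:
  fixes B :: "real^'n^'n"
  shows "norm (B *v x) \<le> real CARD('n)^2 * norm B * norm x"
proof -
  have "norm (B *v x) \<le> onorm ((*v) B) * norm x"
    using onorm[OF matrix_vector_mul_bounded_linear] by blast
  also have "onorm ((*v) B) \<le> (\<Sum>i\<in>UNIV. \<Sum>j\<in>UNIV. \<bar>B $ i $ j\<bar>)"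
    by (rule onorm_le_matrix_component_sum)
  also have "\<dots> \<le> (\<Sum>i\<in>(UNIV::'n set). \<Sum>j\<in>(UNIV::'n set). norm B)"
  proof (intro sum_mono)
    fix i j
    have "\<bar>B $ i $ j\<bar> \<le> norm (B $ i)" by (rule component_le_norm_cart)
    also have "\<dots> \<le> norm B" by (rule Finite_Cartesian_Product.norm_nth_le)
    finally show "\<bar>B $ i $ j\<bar> \<le> norm B" .
  qed
  also have "\<dots> = real CARD('n)^2 * norm B" by (simp add: power2_eq_square)
  finally show ?thesis by (simp add: mult_right_mono)
qed

lemma key_bound:
  fixes A :: "real^'n^'n" and a b :: "real^'n" and K :: real
  assumes c: "c > 0" "\<And>B. c * norm B \<le> N B"
    and ij: "i1 \<noteq> i2" and ab: "a \<bullet> a = 1" "b \<bullet> b = 1" "a \<bullet> b = 0"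
    and orth: "\<And>i. i \<noteq> i1 \<Longrightarrow> i \<noteq> i2 \<Longrightarrow> a \<bullet> A$i = 0 \<and> b \<bullet> A$i = 0"
    and K: "K > 0"
    and sec: "\<bar>th (a \<bullet> A$i1) (b \<bullet> A$i1) - th (a \<bullet> A$i2) (b \<bullet> A$i2)\<bar> \<le> pi / K"
  shows "ennreal (c * c / (real CARD('n) ^ 2 * pi) * K) \<le> cond_num N A"
proof (cases "invertible A")
  case False then show ?thesis by (simp add: cond_num_def)
next
  case True
  note inv = minv_props[OF True]
  define x1 where "x1 = a \<bullet> A$i1"
  define y1 where "y1 = b \<bullet> A$i1"
  define x2 where "x2 = a \<bullet> A$i2"
  define y2 where "y2 = b \<bullet> A$i2"
  define D where "D = x1 * y2 - y1 * x2"
  define n where "n = real CARD('n)^2"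
  have n0: "n > 0" unfolding n_def by simp
  have comb: "(A *v (p *\<^sub>R a + q *\<^sub>R b)) $ i = p * (a \<bullet> A$i) + q * (b \<bullet> A$i)" for p q i
    by (simp add: mv_comp inner_add_right inner_commute)
  have ker: "A *v v = 0 \<Longrightarrow> v = 0" for v
  proof -
    assume "A *v v = 0"
    then have "(matrix_inv A ** A) *v v = 0" by (simp add: matrix_vector_mul_assoc[symmetric])
    then show "v = 0" by (simp add: inv)
  qed
  have nrm2: "(p *\<^sub>R a + q *\<^sub>R b) \<bullet> (p *\<^sub>R a + q *\<^sub>R b) = p^2 + q^2" for p q
    using ab by (simp add: inner_add_left inner_add_right inner_commute power2_eq_square)
  have nz: "p *\<^sub>R a + q *\<^sub>R b = 0 \<Longrightarrow> p = 0 \<and> q = 0" for p q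
    using nrm2[of p q] by (simp add: sum_power2_eq_zero_iff)
  define w where "w = y2 *\<^sub>R a + (- x2) *\<^sub>R b"
  have Aw: "A *v w = D *\<^sub>R axis i1 1"
  proof (subst vec_eq_iff, intro allI)
    fix i
    show "(A *v w) $ i = (D *\<^sub>R axis i1 1) $ i"
      unfolding w_def comb using orth[of i] ij
      by (cases "i = i1"; cases "i = i2") (auto simp: D_def x1_def x2_def y1_def y2_def axis_def algebra_simps)
  qed
  have D0: "D \<noteq> 0"
  proof
    assume D: "D = 0"
    show False
    proof (cases "x2 = 0 \<and> y2 = 0")
      case False
      then have "w \<noteq> 0" using nz[of y2 "-x2"] unfolding w_def by auto
      then show False using ker Aw D by auto
    next
      case T2: True
      define v where "v = y1 *\<^sub>R a + (- x1) *\<^sub>R b"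
      have "A *v v = 0"
      proof (subst vec_eq_iff, intro allI)
        fix i
        show "(A *v v) $ i = 0 $ i"
          unfolding v_def comb using orth[of i] ij T2
          by (cases "i = i1"; cases "i = i2") (auto simp: x1_def x2_def y1_def y2_def algebra_simps)
      qed
      then have "v = 0" by (rule ker)
      then have T1: "x1 = 0 \<and> y1 = 0" using nz[of y1 "-x1"] unfolding v_def by auto
      have "A *v (1 *\<^sub>R a + 0 *\<^sub>R b) = 0"
      proof (subst vec_eq_iff, intro allI)
        fix i
        show "(A *v (1 *\<^sub>R a + 0 *\<^sub>R b)) $ i = 0 $ i"
          unfolding comb using orth[of i] ij T2 T1
          by (cases "i = i1"; cases "i = i2") (auto simp: x1_def x2_def y1_def y2_def)
      qed
      then have "1 *\<^sub>R a + 0 *\<^sub>R b = 0" by (rule ker)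
      then show False using nz by fastforce
    qed
  qed
  define r1 where "r1 = sqrt (x1^2 + y1^2)"
  define r2 where "r2 = sqrt (x2^2 + y2^2)"
  have Dle: "\<bar>D\<bar> \<le> r1 * r2 * (pi / K)"
  proof -
    have "\<bar>D\<bar> \<le> r1 * r2 * \<bar>th x1 y1 - th x2 y2\<bar>"
      unfolding D_def r1_def r2_def by (rule det2_bound)
    also have "\<dots> \<le> r1 * r2 * (pi / K)"
      using sec by (intro mult_left_mono) (auto simp: r1_def r2_def x1_def x2_def y1_def y2_def)
    finally show ?thesis .
  qed
  have r1le: "r1 \<le> norm (A $ i1)"
  proof -
    define u where "u = x1 *\<^sub>R a + y1 *\<^sub>R b"
    have uu: "norm u = r1" unfolding norm_eq_sqrt_inner u_def nrm2 r1_def ..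
    have "A $ i1 \<bullet> u = r1^2" unfolding u_def r1_def
      by (simp add: inner_add_right x1_def y1_def inner_commute power2_eq_square)
    then have "r1^2 \<le> norm (A $ i1) * r1" using norm_cauchy_schwarz[of "A $ i1" u] uu by simp
    moreover have "r1 \<ge> 0" unfolding r1_def by simp
    ultimately show ?thesis by (cases "r1 = 0") (auto simp: power2_eq_square)
  qed
  have r2le: "r2 \<le> n * norm (matrix_inv A) * \<bar>D\<bar>"
  proof -
    have "w = matrix_inv A *v (D *\<^sub>R axis i1 1)"
      using Aw by (metis inv(2) matrix_vector_mul_assoc matrix_vector_mul_lid)
    then have "norm w \<le> n * norm (matrix_inv A) * norm (D *\<^sub>R axis i1 (1::real))"
      unfolding n_def by (metis mv_bound)
    moreover have "norm w = r2" unfolding norm_eq_sqrt_inner w_def nrm2 r2_def by simp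
    ultimately show ?thesis by simp
  qed
  have NA: "c * r1 \<le> N A"
  proof -
    have "c * r1 \<le> c * norm A" using r1le Finite_Cartesian_Product.norm_nth_le[of A i1] c(1) by (intro mult_left_mono) auto
    also have "\<dots> \<le> N A" by (rule c(2))
    finally show ?thesis .
  qed
  have NI: "c * r2 / (n * \<bar>D\<bar>) \<le> N (matrix_inv A)"
  proof -
    have "c * r2 / (n * \<bar>D\<bar>) \<le> c * norm (matrix_inv A)"
      using r2le D0 n0 c(1) by (simp add: field_simps)
    also have "\<dots> \<le> N (matrix_inv A)" by (rule c(2))
    finally show ?thesis .
  qed
  have r12: "r1 * r2 > 0" using Dle D0 K by (smt (verit) mult_nonneg_nonneg pi_gt_zero divide_pos_pos r1_def r2_def real_sqrt_ge_zero zero_less_mult_iff)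
  have "c * c / (n * pi) * K \<le> (c * r1) * (c * r2 / (n * \<bar>D\<bar>))"
  proof -
    have "\<bar>D\<bar> * K \<le> r1 * r2 * pi" using Dle K by (simp add: field_simps)
    then have "c * c * (\<bar>D\<bar> * K) \<le> c * c * (r1 * r2 * pi)" using c(1) by (intro mult_left_mono) auto
    then show ?thesis using D0 n0 pi_gt_zero by (simp add: field_simps)
  qed
  also have "\<dots> \<le> N A * N (matrix_inv A)"
  proof (rule mult_mono[OF NA NI])
    have "0 \<le> c * norm A" using c(1) by simp
    then show "0 \<le> N A" using c(2)[of A] by linarith
    show "0 \<le> c * r2 / (n * \<bar>D\<bar>)" using c(1) n0 by (simp add: r2_def)
  qed
  finally show ?thesis using True by (simp add: cond_num_def n_def ennreal_leI)
qed



lemma inner_inf: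
  fixes \<mu> :: "'b measure" and F :: "('i \<Rightarrow> 'b) \<Rightarrow> ennreal" and \<psi> :: "'b \<Rightarrow> real"
  assumes pm: "prob_space \<mu>" and ij: "i1 \<noteq> i2"
    and \<psi>m[measurable]: "\<psi> \<in> borel_measurable \<mu>" and \<psi>r: "\<And>r. r \<in> space \<mu> \<Longrightarrow> 0 \<le> \<psi> r \<and> \<psi> r \<le> 1"
    and C: "C > 0"
    and Fb: "\<And>x K. x \<in> space (PiM {i1,i2} (\<lambda>_. \<mu>)) \<Longrightarrow> K > 0 \<Longrightarrow> \<bar>\<psi> (x i1) - \<psi> (x i2)\<bar> \<le> 1 / K \<Longrightarrow> ennreal (C * K) \<le> F x"
  shows "(\<integral>\<^sup>+x. F x \<partial>PiM {i1,i2} (\<lambda>_. \<mu>)) = \<infinity>"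
proof -
  interpret mu: prob_space \<mu> by (rule pm)
  interpret PS: product_sigma_finite "\<lambda>_::'i. \<mu>"
    by (simp add: product_sigma_finite_def mu.sigma_finite_measure_axioms)
  define J where "J = {i1, i2}"
  define P where "P = PiM J (\<lambda>_. \<mu>)"
  have pP: "prob_space P" unfolding P_def by (rule prob_space_PiM) (rule pm)
  interpret P: prob_space P by (rule pP)
  have finJ: "finite J" unfolding J_def by simp
  define T where "T K s = {r \<in> space \<mu>. real s \<le> real K * \<psi> r \<and> real K * \<psi> r < real s + 1}" for K s :: nat
  have Tm: "T K s \<in> sets \<mu>" for K s unfolding T_def by measurable
  define B where "B K = (\<Union>s\<in>{0..K}. PiE J (\<lambda>_. T K s))" for K
  have PiEm: "PiE J (\<lambda>_. T K s) \<in> sets P" for K s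
    unfolding P_def using Tm finJ by (intro sets_PiM_I_finite) auto
  have Bm: "B K \<in> sets P" for K unfolding B_def using PiEm by auto
  have Tdisj: "disjoint_family_on (T K) S" for K S
    unfolding disjoint_family_on_def T_def
  proof (intro ballI impI)
    fix s t :: nat assume "s \<noteq> t"
    show "{r \<in> space \<mu>. real s \<le> real K * \<psi> r \<and> real K * \<psi> r < real s + 1} \<inter>
          {r \<in> space \<mu>. real t \<le> real K * \<psi> r \<and> real K * \<psi> r < real t + 1} = {}"
    proof (rule ccontr)
      assume "\<not> ?thesis"
      then obtain r where "real s \<le> real K * \<psi> r" "real K * \<psi> r < real s + 1"
         "real t \<le> real K * \<psi> r" "real K * \<psi> r < real t + 1" by auto
      then have "real s < real t + 1" "real t < real s + 1" by linarith+
      then have "s = t" by linarith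
      with \<open>s \<noteq> t\<close> show False by simp
    qed
  qed
  have Tcover: "(\<Union>s\<in>{0..K}. T K s) = space \<mu>" for K
  proof
    show "(\<Union>s\<in>{0..K}. T K s) \<subseteq> space \<mu>" unfolding T_def by auto
    show "space \<mu> \<subseteq> (\<Union>s\<in>{0..K}. T K s)"
    proof
      fix r assume r: "r \<in> space \<mu>"
      define s where "s = nat \<lfloor>real K * \<psi> r\<rfloor>"
      have k0: "0 \<le> real K * \<psi> r" "real K * \<psi> r \<le> real K" using \<psi>r[OF r]
        by (auto simp: mult_left_le)
      have "real s = of_int \<lfloor>real K * \<psi> r\<rfloor>" unfolding s_def using k0 by simp
      then have "real s \<le> real K * \<psi> r" "real K * \<psi> r < real s + 1" by linarith+
      moreover have "s \<le> K" using k0 \<open>real s \<le> real K * \<psi> r\<close> by linarith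
      ultimately show "r \<in> (\<Union>s\<in>{0..K}. T K s)" using r unfolding T_def by auto
    qed
  qed
  have mPiE: "measure P (PiE J (\<lambda>_. T K s)) = (measure \<mu> (T K s))^2" for K s
  proof -
    have "emeasure P (PiE J (\<lambda>_. T K s)) = (\<Prod>i\<in>J. emeasure \<mu> (T K s))"
      unfolding P_def using Tm finJ by (intro PS.emeasure_PiM) auto
    also have "\<dots> = ennreal ((measure \<mu> (T K s))^2)"
      using ij by (simp add: J_def mu.emeasure_eq_measure power2_eq_square ennreal_mult)
    finally show ?thesis unfolding measure_def by simp
  qed
  have PiEdisj: "disjoint_family_on (\<lambda>s. PiE J (\<lambda>_. T K s)) S" for K S
    using Tdisj[of K S] unfolding disjoint_family_on_def J_def by (auto simp: PiE_iff; blast)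
  have PB: "measure P (B K) \<ge> 1 / (real K + 1)" for K
  proof -
    have "measure P (B K) = (\<Sum>s\<in>{0..K}. measure P (PiE J (\<lambda>_. T K s)))"
      unfolding B_def using PiEm PiEdisj by (intro measure_finite_Union) (auto simp: P.emeasure_eq_measure)
    also have "\<dots> = (\<Sum>s\<in>{0..K}. (measure \<mu> (T K s))^2)" by (simp add: mPiE)
    finally have e1: "measure P (B K) = (\<Sum>s\<in>{0..K}. (measure \<mu> (T K s))^2)" .
    have "1 = measure \<mu> (\<Union>s\<in>{0..K}. T K s)" using Tcover[of K] mu.prob_space by simp
    also have "\<dots> = (\<Sum>s\<in>{0..K}. measure \<mu> (T K s))"
      using Tm Tdisj by (intro measure_finite_Union) (auto simp: mu.emeasure_eq_measure)
    finally have e2: "(\<Sum>s\<in>{0..K}. measure \<mu> (T K s)) = 1" by simp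
    have "(\<Sum>s\<in>{0..K}. measure \<mu> (T K s))^2 \<le> (\<Sum>s\<in>{0..K}. (measure \<mu> (T K s))^2) * card {0..K}"
      by (rule sum_squared_le_sum_of_squares)
    then have "1 \<le> measure P (B K) * (real K + 1)" using e1 e2 by (simp add: add.commute)
    then show ?thesis by (simp add: field_simps)
  qed
  have Bclose: "x \<in> B K \<Longrightarrow> K > 0 \<Longrightarrow> \<bar>\<psi> (x i1) - \<psi> (x i2)\<bar> \<le> 1 / real K" for x K
  proof -
    assume "x \<in> B K" "K > 0"
    then obtain s where "x i1 \<in> T K s" "x i2 \<in> T K s" unfolding B_def J_def by auto
    then have "\<bar>real K * \<psi> (x i1) - real K * \<psi> (x i2)\<bar> < 1" unfolding T_def by auto
    then have "real K * \<bar>\<psi> (x i1) - \<psi> (x i2)\<bar> < 1" by (simp add: abs_mult right_diff_distrib[symmetric])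
    then show ?thesis using \<open>K > 0\<close> by (simp add: field_simps)
  qed
  have pw: "ennreal (C * (\<Sum>K\<in>{1..m}. indicator (B K) x)) \<le> F x" if x: "x \<in> space P" for x m
  proof -
    define S where "S = {K\<in>{1..m}. x \<in> B K}"
    have "(\<Sum>K\<in>{1..m}. indicator (B K) x :: real) = (\<Sum>K\<in>{1..m}. if K \<in> S then 1 else 0)"
      by (intro sum.cong) (auto simp: S_def indicator_def)
    also have "\<dots> = real (card ({1..m} \<inter> S))" by (simp add: sum.If_cases)
    also have "{1..m} \<inter> S = S" unfolding S_def by auto
    finally have sc: "(\<Sum>K\<in>{1..m}. indicator (B K) x :: real) = real (card S)" .
    show ?thesis
    proof (cases "S = {}")
      case True then show ?thesis using sc by simp
    next
      case False
      have finS: "finite S" unfolding S_def by simp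
      define K0 where "K0 = Max S"
      have K0S: "K0 \<in> S" unfolding K0_def using finS False by simp
      then have K0: "K0 > 0" "x \<in> B K0" unfolding S_def by auto
      have "S \<subseteq> {1..K0}" unfolding K0_def using finS by (auto simp: S_def)
      then have "card S \<le> K0" using card_mono[of "{1..K0}" S] by simp
      then have "C * real (card S) \<le> C * real K0" using C by simp
      moreover have "ennreal (C * real K0) \<le> F x"
        using Fb[of x "real K0"] x K0 Bclose[of x K0] unfolding P_def J_def by simp
      ultimately show ?thesis using sc by (metis ennreal_leI order_trans)
    qed
  qed
  have lb: "ennreal (C * (\<Sum>K\<in>{1..m}. 1 / (real K + 1))) \<le> (\<integral>\<^sup>+x. F x \<partial>P)" for m
  proof -
    have "ennreal (C * (\<Sum>K\<in>{1..m}. 1 / (real K + 1))) \<le> ennreal (C * (\<Sum>K\<in>{1..m}. measure P (B K)))"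
      using C PB by (intro ennreal_leI mult_left_mono sum_mono) auto
    also have "\<dots> = ennreal C * (\<Sum>K\<in>{1..m}. emeasure P (B K))"
      using C by (simp add: ennreal_mult P.emeasure_eq_measure sum_nonneg)
    also have "\<dots> = (\<integral>\<^sup>+x. ennreal C * (\<Sum>K\<in>{1..m}. indicator (B K) x) \<partial>P)"
      using Bm by (simp add: nn_integral_cmult nn_integral_sum)
    also have "\<dots> = (\<integral>\<^sup>+x. ennreal (C * (\<Sum>K\<in>{1..m}. indicator (B K) x)) \<partial>P)"
      using C by (intro nn_integral_cong) (simp add: ennreal_mult ennreal_indicator[symmetric] sum_nonneg)
    also have "\<dots> \<le> (\<integral>\<^sup>+x. F x \<partial>P)"
      by (intro nn_integral_mono pw)
    finally show ?thesis .
  qed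
  have harm_eq: "(\<Sum>K\<in>{1..m}. 1 / (real K + 1)) = harm (Suc m) - 1" for m
  proof (induction m)
    case 0 then show ?case by (simp add: harm_def)
  next
    case (Suc m)
    have h: "harm (Suc (Suc m)) = harm (Suc m) + 1 / (real (Suc m) + 1)"
      by (subst harm_Suc) (simp add: divide_inverse add.commute)
    have "(\<Sum>K\<in>{1..Suc m}. 1 / (real K + 1)) = (\<Sum>K\<in>{1..m}. 1 / (real K + 1)) + 1 / (real (Suc m) + 1)"
      by simp
    then show ?case using Suc.IH h by linarith
  qed
  show ?thesis
  proof (rule ccontr)
    assume A: "(\<integral>\<^sup>+x. F x \<partial>PiM {i1,i2} (\<lambda>_. \<mu>)) \<noteq> \<infinity>"
    obtain R where R: "(\<integral>\<^sup>+x. F x \<partial>P) = ennreal R" "R \<ge> 0"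
    proof (cases "(\<integral>\<^sup>+x. F x \<partial>P)" rule: ennreal_cases)
      case (real r) then show ?thesis using that by blast
    next
      case top then show ?thesis using A unfolding P_def J_def by simp
    qed
    have le: "C * (harm (Suc m) - 1) \<le> R" for m
    proof -
      have "ennreal (C * (harm (Suc m) - 1)) \<le> ennreal R" using lb[of m] R harm_eq[of m] by simp
      then show ?thesis using R(2) by (simp add: ennreal_le_iff)
    qed
    have "filterlim (\<lambda>m. harm (Suc m) :: real) at_top sequentially"
      using harm_at_top filterlim_sequentially_Suc by blast
    then have "eventually (\<lambda>m. harm (Suc m) > R / C + 1) sequentially"
      by (simp add: filterlim_at_top_dense)
    then obtain m where m: "harm (Suc m) > R / C + 1" unfolding eventually_sequentially by auto
    then have "R / C < harm (Suc m) - 1" by simp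
    then have "C * (R / C) < C * (harm (Suc m) - 1)" using C by (rule mult_strict_left_mono)
    moreover have "C * (R / C) = R" using C by simp
    ultimately show False using le[of m] by simp
  qed
qed



lemma vec_meas:
  "(\<lambda>y::'n \<Rightarrow> real^'n. \<chi> i. y i) \<in> borel_measurable (PiM UNIV (\<lambda>_. borel))"
proof -
  have "(\<lambda>y::'n \<Rightarrow> real^'n. (\<chi> i. y i) \<bullet> b) \<in> borel_measurable (PiM UNIV (\<lambda>_. borel))"
    if "b \<in> Basis" for b :: "real^'n^'n"
  proof -
    from that obtain i u where b: "b = axis i u" "u \<in> Basis" unfolding Basis_vec_def by auto
    have e: "(\<chi> i. y i) \<bullet> b = y i \<bullet> u" for y :: "'n \<Rightarrow> real^'n" by (simp add: b inner_axis)
    show ?thesis unfolding e by measurable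
  qed
  then show ?thesis using borel_measurable_euclidean_space by blast
qed

lemma orth_pair:
  fixes S :: "(real^'n) set"
  assumes "finite S" "card S + 2 \<le> CARD('n)"
  obtains a b where "a \<bullet> a = 1" "b \<bullet> b = 1" "a \<bullet> b = 0" "\<And>y. y \<in> S \<Longrightarrow> a \<bullet> y = 0 \<and> b \<bullet> y = 0"
proof -
  have "dim S \<le> card S" using assms(1) by (intro dim_le_card) (auto intro: span_base)
  then have "dim S < DIM(real^'n)" using assms(2) by simp
  then obtain a0 where a0: "a0 \<noteq> 0" "\<And>y. y \<in> span S \<Longrightarrow> orthogonal a0 y"
    using orthogonal_to_subspace_exists by blast
  have "dim (insert a0 S) \<le> card (insert a0 S)" using assms(1) by (intro dim_le_card) (auto intro: span_base)
  also have "\<dots> \<le> card S + 1" using assms(1) by (simp add: card_insert_if)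
  finally have "dim (insert a0 S) < DIM(real^'n)" using assms(2) by simp
  then obtain b0 where b0: "b0 \<noteq> 0" "\<And>y. y \<in> span (insert a0 S) \<Longrightarrow> orthogonal b0 y"
    using orthogonal_to_subspace_exists by blast
  define a where "a = (1 / norm a0) *\<^sub>R a0"
  define b where "b = (1 / norm b0) *\<^sub>R b0"
  have "a \<bullet> a = 1" unfolding a_def using a0(1)
    by (simp add: inner_commute power2_norm_eq_inner[symmetric] power2_eq_square)
  moreover have "b \<bullet> b = 1" unfolding b_def using b0(1)
    by (simp add: inner_commute power2_norm_eq_inner[symmetric] power2_eq_square)
  moreover have "a \<bullet> b = 0"
  proof -
    have "orthogonal b0 a0" using b0(2)[of a0] by (simp add: span_base)
    then show ?thesis unfolding a_def b_def orthogonal_def by (simp add: inner_commute)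
  qed
  moreover have "a \<bullet> y = 0 \<and> b \<bullet> y = 0" if "y \<in> S" for y
  proof -
    have "orthogonal a0 y" using a0(2) that by (simp add: span_base)
    moreover have "orthogonal b0 y" using b0(2) that by (simp add: span_base)
    ultimately show ?thesis unfolding a_def b_def orthogonal_def by simp
  qed
  ultimately show ?thesis using that by blast
qed

lemma two_idx:
  assumes "CARD('n) \<ge> 2"
  obtains i1 i2 :: 'n where "i1 \<noteq> i2"
proof -
  obtain i1 :: 'n where True by simp
  have "\<exists>i2. i2 \<noteq> i1"
  proof (rule ccontr)
    assume "\<not> ?thesis"
    then have "(UNIV :: 'n set) \<subseteq> {i1}" by auto
    then have "CARD('n) \<le> 1" using card_mono[of "{i1}" UNIV] by simp
    then show False using assms by simp
  qed
  then show ?thesis using that by blast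
qed



theorem mainTheorem2:
  fixes M :: "'a measure" and X :: "'a \<Rightarrow> real^'n^'n" and N :: "real^'n^'n \<Rightarrow> real"
  assumes "prob_space M"
    and "CARD('n) \<ge> 2"
    and "prob_space.indep_vars M (\<lambda>_. borel) (\<lambda>i \<omega>. X \<omega> $ i) UNIV"
    and "\<And>i j. distr M borel (\<lambda>\<omega>. X \<omega> $ i) = distr M borel (\<lambda>\<omega>. X \<omega> $ j)"
    and "is_matrix_norm N"
  shows "(\<integral>\<^sup>+ \<omega>. cond_num N (X \<omega>) \<partial>M) = \<infinity>"
proof -
  interpret prob_space M by (rule assms(1))
  note Nn = assms(5)
  obtain i1 i2 :: 'n where ij: "i1 \<noteq> i2" using two_idx[OF assms(2)] by blast
  obtain c where c: "c > 0" "\<And>A. c * norm A \<le> N A" using matnorm_lower[OF Nn] by blast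
  have rv[measurable]: "(\<lambda>\<omega>. X \<omega> $ i) \<in> borel_measurable M" for i
    using assms(3) unfolding indep_vars_def by auto
  define \<mu> where "\<mu> = distr M borel (\<lambda>\<omega>. X \<omega> $ i1)"
  have mui: "distr M borel (\<lambda>\<omega>. X \<omega> $ i) = \<mu>" for i unfolding \<mu>_def by (rule assms(4))
  have pmu: "prob_space \<mu>" unfolding \<mu>_def by (rule prob_space_distr) simp
  interpret mu: prob_space \<mu> by (rule pmu)
  interpret PS: product_sigma_finite "\<lambda>_::'n. \<mu>"
    by (simp add: product_sigma_finite_def mu.sigma_finite_measure_axioms)
  have smu: "sets \<mu> = sets borel" unfolding \<mu>_def by simp
  define f where "f y = cond_num N (\<chi> i. y i)" for y :: "'n \<Rightarrow> real^'n"
  have fmb: "f \<in> borel_measurable (PiM UNIV (\<lambda>_. borel))"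
    unfolding f_def using measurable_comp[OF vec_meas meas_cond_num[OF Nn]] by (simp add: comp_def)
  have sPi: "sets (PiM UNIV (\<lambda>_::'n. \<mu>)) = sets (PiM UNIV (\<lambda>_::'n. borel :: (real^'n) measure))"
    using smu by (intro sets_PiM_cong) auto
  have fm: "f \<in> borel_measurable (PiM UNIV (\<lambda>_. \<mu>))"
    using fmb measurable_cong_sets[OF sPi refl] by blast
  have D: "distr M (PiM UNIV (\<lambda>_. borel)) (\<lambda>\<omega>. \<lambda>i\<in>UNIV. X \<omega> $ i) = PiM UNIV (\<lambda>_. \<mu>)"
  proof -
    have "distr M (PiM UNIV (\<lambda>_. borel)) (\<lambda>\<omega>. \<lambda>i\<in>UNIV. X \<omega> $ i) = PiM UNIV (\<lambda>i. distr M borel (\<lambda>\<omega>. X \<omega> $ i))"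
      using assms(3) indep_vars_iff_distr_eq_PiM[where I=UNIV and M'="\<lambda>_. borel" and X="\<lambda>i \<omega>. X \<omega> $ i"] by simp
    also have "\<dots> = PiM UNIV (\<lambda>_. \<mu>)" by (simp add: mui)
    finally show ?thesis .
  qed
  have step1: "(\<integral>\<^sup>+ \<omega>. cond_num N (X \<omega>) \<partial>M) = (\<integral>\<^sup>+ y. f y \<partial>PiM UNIV (\<lambda>_. \<mu>))"
  proof -
    have "(\<integral>\<^sup>+ \<omega>. cond_num N (X \<omega>) \<partial>M) = (\<integral>\<^sup>+ \<omega>. f (\<lambda>i\<in>UNIV. X \<omega> $ i) \<partial>M)"
      by (simp add: f_def vec_lambda_eta)
    also have "\<dots> = (\<integral>\<^sup>+ y. f y \<partial>distr M (PiM UNIV (\<lambda>_. borel)) (\<lambda>\<omega>. \<lambda>i\<in>UNIV. X \<omega> $ i))"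
    proof -
      have mr: "(\<lambda>\<omega>. \<lambda>i\<in>UNIV. X \<omega> $ i) \<in> measurable M (PiM UNIV (\<lambda>_. borel))"
        by (rule measurable_restrict) simp
      show ?thesis by (rule nn_integral_distr[symmetric, OF mr]) (simp add: fmb)
    qed
    also have "\<dots> = (\<integral>\<^sup>+ y. f y \<partial>PiM UNIV (\<lambda>_. \<mu>))" by (simp add: D)
    finally show ?thesis .
  qed
  define J where "J = {i1, i2}"
  define R where "R = UNIV - J"
  have RJ: "R \<inter> J = {}" "R \<union> J = UNIV" unfolding R_def by auto
  have fm': "f \<in> borel_measurable (PiM (R \<union> J) (\<lambda>_. \<mu>))" using fm RJ by simp
  have fold: "(\<integral>\<^sup>+ y. f y \<partial>PiM UNIV (\<lambda>_. \<mu>)) =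
      (\<integral>\<^sup>+ \<rho>. (\<integral>\<^sup>+ x. f (merge R J (\<rho>, x)) \<partial>PiM J (\<lambda>_. \<mu>)) \<partial>PiM R (\<lambda>_. \<mu>))"
    using PS.product_nn_integral_fold[OF RJ(1) _ _ fm'] RJ(2) by simp
  have inner: "(\<integral>\<^sup>+ x. f (merge R J (\<rho>, x)) \<partial>PiM J (\<lambda>_. \<mu>)) = \<infinity>" for \<rho>
  proof -
    have cR: "card (\<rho> ` R) + 2 \<le> CARD('n)"
    proof -
      have "card (\<rho> ` R) \<le> card R" by (rule card_image_le) simp
      moreover have "card R + card J = CARD('n)"
        using RJ card_Un_disjoint[of R J] by simp
      moreover have "card J = 2" unfolding J_def using ij by simp
      ultimately show ?thesis by simp
    qed
    obtain a b where ab: "a \<bullet> a = 1" "b \<bullet> b = 1" "a \<bullet> b = 0"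
      and orth0: "\<And>y. y \<in> \<rho> ` R \<Longrightarrow> a \<bullet> y = 0 \<and> b \<bullet> y = 0"
      using orth_pair[OF finite_imageI[OF finite[of R]] cR] by blast
    define \<psi> where "\<psi> r = th (a \<bullet> r) (b \<bullet> r) / pi + 1/2" for r :: "real^'n"
    have \<psi>b: "\<psi> \<in> borel_measurable borel" unfolding \<psi>_def th_def by measurable
    have \<psi>m: "\<psi> \<in> borel_measurable \<mu>" using \<psi>b measurable_cong_sets[OF smu refl] by blast
    have \<psi>r: "0 \<le> \<psi> r \<and> \<psi> r \<le> 1" for r
      using th_bounds[of "a \<bullet> r" "b \<bullet> r"] pi_gt_zero unfolding \<psi>_def by (auto simp: field_simps)
    define C where "C = c * c / (real CARD('n) ^ 2 * pi)"
    have C0: "C > 0" unfolding C_def using c(1) by simp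
    have Fb: "ennreal (C * K) \<le> f (merge R J (\<rho>, x))"
      if "K > 0" "\<bar>\<psi> (x i1) - \<psi> (x i2)\<bar> \<le> 1 / K" for x K
    proof -
      define A where "A = (\<chi> i. merge R J (\<rho>, x) i)"
      have A1: "A $ i1 = x i1" "A $ i2 = x i2" unfolding A_def using RJ by (auto simp: merge_def J_def)
      have orth: "a \<bullet> A$i = 0 \<and> b \<bullet> A$i = 0" if "i \<noteq> i1" "i \<noteq> i2" for i
      proof -
        have "i \<in> R" unfolding R_def J_def using that by auto
        then have "A $ i = \<rho> i" unfolding A_def by (simp add: merge_def)
        then show ?thesis using orth0 \<open>i \<in> R\<close> by auto
      qed
      have "\<bar>th (a \<bullet> A$i1) (b \<bullet> A$i1) - th (a \<bullet> A$i2) (b \<bullet> A$i2)\<bar> = pi * \<bar>\<psi> (x i1) - \<psi> (x i2)\<bar>"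
      proof -
        have "\<psi> (x i1) - \<psi> (x i2) = (th (a \<bullet> x i1) (b \<bullet> x i1) - th (a \<bullet> x i2) (b \<bullet> x i2)) / pi"
          unfolding \<psi>_def by (simp add: diff_divide_distrib)
        then show ?thesis unfolding A1 using pi_gt_zero by (simp add: abs_divide)
      qed
      also have "\<dots> \<le> pi * (1 / K)" using that(2) pi_gt_zero by (intro mult_left_mono) auto
      finally have sec: "\<bar>th (a \<bullet> A$i1) (b \<bullet> A$i1) - th (a \<bullet> A$i2) (b \<bullet> A$i2)\<bar> \<le> pi / K" by simp
      have "ennreal (c * c / (real CARD('n) ^ 2 * pi) * K) \<le> cond_num N A"
        by (rule key_bound[OF c ij ab orth that(1) sec])
      then show ?thesis unfolding f_def A_def C_def .
    qed
    show ?thesis unfolding J_def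
      by (rule inner_inf[OF pmu ij \<psi>m \<psi>r C0]) (use Fb in \<open>auto simp: J_def\<close>)
  qed
  have pR: "prob_space (PiM R (\<lambda>_. \<mu>))" by (rule prob_space_PiM) (rule pmu)
  have "(\<integral>\<^sup>+ \<rho>. (\<integral>\<^sup>+ x. f (merge R J (\<rho>, x)) \<partial>PiM J (\<lambda>_. \<mu>)) \<partial>PiM R (\<lambda>_. \<mu>)) = (\<integral>\<^sup>+ \<rho>. \<infinity> \<partial>PiM R (\<lambda>_. \<mu>))"
    by (simp add: inner)
  also have "\<dots> = \<infinity>" using prob_space.emeasure_space_1[OF pR] by simp
  finally show ?thesis using step1 fold by simp
qed


end
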